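(* For $t>1$ let $a=\frac{t\theta}{\sqrt{t^2-1}}$, $b=\frac{\theta}{\sqrt{t^2-1}}$, $e_1=(\cos a\cos\phi,\cos a\sin\phi,\sin a\cos\phi,\sin a\sin\phi)$ and $Y_t:\mathbb{R}^2\to\mathbb{R}^6_2$, $Y_t(\theta,\phi)=(e_1,\cos b,\sin b)$. Then $y_t=[Y_t]:\mathbb{R}^2\to Q^4_1$ is a conformal spacelike Willmore immersion (with respect to $z=\theta+i\phi$, for which $Y_t$ is the canonical lift) which is not S-Willmore; its conformal Hopf differential is $\kappa=-\frac{it}{2\sqrt2\sqrt{t^2-1}}(L-R)$. If $t=p/q$ with $p>q\geq1$ coprime integers, $y_t$ descends to a spacelike Willmore torus $\mathbb{R}^2/\Lambda\to Q^4_1$ with $\Lambda$ generated by $(2\pi q\sqrt{t^2-1},0)$ and $(0,2\pi)$, and its Willmore functional is $W(y_t)=\frac{p^2}{\sqrt{p^2-q^2}}\pi^2$; the minimum of these values over all such $p,q$ is $\frac{4}{\sqrt3}\pi^2$.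
   Context: $\mathbb{R}^6_2$ is $\mathbb{R}^6$ with inner product $\langle x,y\rangle=\sum_{i=1}^4x_iy_i-x_5y_5-x_6y_6$ (extended complex-bilinearly), with a fixed orientation; $C^5$ its light cone; $Q^4_1=\{[x]\in\mathbb{R}P^5:x\in C^5\setminus\{0\}\}$. A conformal spacelike immersion $y$ into $Q^4_1$ satisfies, for any local lift $Y$ and complex coordinate $z=u+iv$, $\langle Y_z,Y_z\rangle=0$, $\langle Y_z,Y_{\bar z}\rangle>0$ ($Y_z=\frac12(Y_u-iY_v)$); the canonical lift has $\langle Y_z,Y_{\bar z}\rangle=\frac12$. $V=\mathrm{Span}\{Y,Y_u,Y_v,Y_{z\bar z}\}$, $V^\perp$ its orthogonal complement; $N\in\Gamma(V)$ with $\langle N,Y_z\rangle=\langle N,N\rangle=0$, $\langle N,Y\rangle=-1$; $L,R\in\Gamma(V^\perp)$ real null with $\langle L,R\rangle=-1$ and $\{Y,Y_u,Y_v,N,R,L\}$ positively oriented. $Y_{zz}=-\frac s2Y+\kappa$ defines the conformal Hopf differential $\kappa$; $D$ is the normal connection on $V^\perp$. The Willmore functional is $W(y)=\frac i2\int_M\langle\kappa,\bar\kappa\rangle dz\wedge d\bar z$; $y$ is Willmore if it is critical for $W$ under all variations, equivalently $D_{\bar z}D_{\bar z}\kappa+\frac{\bar s}2\kappa=0$; S-Willmore if additionally $D_{\bar z}\kappa$ is parallel to $\kappa$. *)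

theory Defs
  imports "HOL-Analysis.Analysis"
begin

text \<open>Coordinates 1..6 of R^6 are the indices 1,2,3,4,5,6 of the numeral type 6
  (where the index 6 coincides with 0 of that type; all six are distinct).\<close>

definition mk6 :: "'a \<Rightarrow> 'a \<Rightarrow> 'a \<Rightarrow> 'a \<Rightarrow> 'a \<Rightarrow> 'a \<Rightarrow> 'a^6" where
  "mk6 a1 a2 a3 a4 a5 a6 =
     (\<chi> i. if i = 1 then a1 else if i = 2 then a2 else if i = 3 then a3
           else if i = 4 then a4 else if i = 5 then a5 else a6)"

definition sig :: "6 \<Rightarrow> real" where
  "sig i = (if i = 5 \<or> i = 6 then -1 else 1)"

definition lor :: "real^6 \<Rightarrow> real^6 \<Rightarrow> real" where
  "lor x y = (\<Sum>i\<in>UNIV. sig i * x$i * y$i)"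

definition clor :: "complex^6 \<Rightarrow> complex^6 \<Rightarrow> complex" where
  "clor x y = (\<Sum>i\<in>UNIV. complex_of_real (sig i) * x$i * y$i)"

definition cvec :: "real^6 \<Rightarrow> complex^6" where
  "cvec x = (\<chi> i. complex_of_real (x$i))"

definition vRe :: "complex^6 \<Rightarrow> real^6" where
  "vRe w = (\<chi> i. Re (w$i))"

definition vIm :: "complex^6 \<Rightarrow> real^6" where
  "vIm w = (\<chi> i. Im (w$i))"

definition vcnj :: "complex^6 \<Rightarrow> complex^6" where
  "vcnj w = (\<chi> i. cnj (w$i))"

definition pd :: "(complex \<Rightarrow> 'a::real_normed_vector) \<Rightarrow> complex \<Rightarrow> complex \<Rightarrow> 'a" where
  "pd F d p = vector_derivative (\<lambda>s::real. F (p + complex_of_real s * d)) (at 0)"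

fun iterpd :: "complex list \<Rightarrow> (complex \<Rightarrow> 'a::real_normed_vector) \<Rightarrow> complex \<Rightarrow> 'a" where
  "iterpd [] F = F"
| "iterpd (d # ds) F = pd (iterpd ds F) d"

definition smooth_map :: "(complex \<Rightarrow> 'a::real_normed_vector) \<Rightarrow> bool" where
  "smooth_map F \<longleftrightarrow> (\<forall>ds p. iterpd ds F differentiable (at p))"

definition dz :: "(complex \<Rightarrow> complex^6) \<Rightarrow> complex \<Rightarrow> complex^6" where
  "dz F p = (1/2) *s (pd F 1 p - \<i> *s pd F \<i> p)"

definition dzb :: "(complex \<Rightarrow> complex^6) \<Rightarrow> complex \<Rightarrow> complex^6" where
  "dzb F p = (1/2) *s (pd F 1 p + \<i> *s pd F \<i> p)"

definition Yz :: "(complex \<Rightarrow> real^6) \<Rightarrow> complex \<Rightarrow> complex^6" where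
  "Yz Y = dz (cvec \<circ> Y)"

definition Yzb :: "(complex \<Rightarrow> real^6) \<Rightarrow> complex \<Rightarrow> complex^6" where
  "Yzb Y = dzb (cvec \<circ> Y)"

definition Yzz :: "(complex \<Rightarrow> real^6) \<Rightarrow> complex \<Rightarrow> complex^6" where
  "Yzz Y = dz (dz (cvec \<circ> Y))"

definition Yzzb :: "(complex \<Rightarrow> real^6) \<Rightarrow> complex \<Rightarrow> real^6" where
  "Yzzb Y p = (1/4) *\<^sub>R (pd (pd Y 1) 1 p + pd (pd Y \<i>) \<i> p)"

text \<open>Y is a lift (into the light cone minus 0) of a conformal spacelike immersion
  y = [Y] into Q^4_1, with respect to the complex coordinate z.\<close>
definition conf_spacelike_lift :: "(complex \<Rightarrow> real^6) \<Rightarrow> bool" where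
  "conf_spacelike_lift Y \<longleftrightarrow> smooth_map Y \<and>
     (\<forall>p. Y p \<noteq> 0 \<and> lor (Y p) (Y p) = 0 \<and>
          clor (Yz Y p) (Yz Y p) = 0 \<and>
          Im (clor (Yz Y p) (Yzb Y p)) = 0 \<and> Re (clor (Yz Y p) (Yzb Y p)) > 0)"

definition canonical_lift :: "(complex \<Rightarrow> real^6) \<Rightarrow> bool" where
  "canonical_lift Y \<longleftrightarrow> (\<forall>p. clor (Yz Y p) (Yzb Y p) = 1/2)"

definition Vsp :: "(complex \<Rightarrow> real^6) \<Rightarrow> complex \<Rightarrow> (real^6) set" where
  "Vsp Y p = span {Y p, pd Y 1 p, pd Y \<i> p, Yzzb Y p}"

definition Vperp :: "(complex \<Rightarrow> real^6) \<Rightarrow> complex \<Rightarrow> (real^6) set" where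
  "Vperp Y p = {x. \<forall>w\<in>Vsp Y p. lor x w = 0}"

definition cVsp :: "(complex \<Rightarrow> real^6) \<Rightarrow> complex \<Rightarrow> (complex^6) set" where
  "cVsp Y p = {w. vRe w \<in> Vsp Y p \<and> vIm w \<in> Vsp Y p}"

definition cVperp :: "(complex \<Rightarrow> real^6) \<Rightarrow> complex \<Rightarrow> (complex^6) set" where
  "cVperp Y p = {w. vRe w \<in> Vperp Y p \<and> vIm w \<in> Vperp Y p}"

definition Nvec :: "(complex \<Rightarrow> real^6) \<Rightarrow> complex \<Rightarrow> real^6" where
  "Nvec Y p = (THE n. n \<in> Vsp Y p \<and> lor n (pd Y 1 p) = 0 \<and> lor n (pd Y \<i> p) = 0 \<and>
                      lor n n = 0 \<and> lor n (Y p) = -1)"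

definition hopf :: "(complex \<Rightarrow> real^6) \<Rightarrow> complex \<Rightarrow> complex^6" where
  "hopf Y p = (THE k. k \<in> cVperp Y p \<and> (\<exists>s. Yzz Y p = (- s/2) *s cvec (Y p) + k))"

definition sfun :: "(complex \<Rightarrow> real^6) \<Rightarrow> complex \<Rightarrow> complex" where
  "sfun Y p = (THE s. \<exists>k \<in> cVperp Y p. Yzz Y p = (- s/2) *s cvec (Y p) + k)"

definition projperp :: "(complex \<Rightarrow> real^6) \<Rightarrow> complex \<Rightarrow> complex^6 \<Rightarrow> complex^6" where
  "projperp Y p w = (THE k. k \<in> cVperp Y p \<and> w - k \<in> cVsp Y p)"

definition Dzb :: "(complex \<Rightarrow> real^6) \<Rightarrow> (complex \<Rightarrow> complex^6) \<Rightarrow> complex \<Rightarrow> complex^6" where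
  "Dzb Y xi p = projperp Y p (dzb xi p)"

text \<open>Willmore equation (for the canonical lift):
  D_zbar D_zbar kappa + (conj s / 2) kappa = 0.\<close>
definition willmore_lift :: "(complex \<Rightarrow> real^6) \<Rightarrow> bool" where
  "willmore_lift Y \<longleftrightarrow>
     (\<forall>p. Dzb Y (Dzb Y (hopf Y)) p + (cnj (sfun Y p) / 2) *s hopf Y p = 0)"

definition s_willmore_lift :: "(complex \<Rightarrow> real^6) \<Rightarrow> bool" where
  "s_willmore_lift Y \<longleftrightarrow> willmore_lift Y \<and>
     (\<forall>p. \<exists>a b. (a, b) \<noteq> (0, 0) \<and> a *s Dzb Y (hopf Y) p + b *s hopf Y p = 0)"

definition null_normal_frame ::
    "(complex \<Rightarrow> real^6) \<Rightarrow> (complex \<Rightarrow> real^6) \<Rightarrow> (complex \<Rightarrow> real^6) \<Rightarrow> bool" where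
  "null_normal_frame Y L R \<longleftrightarrow> smooth_map L \<and> smooth_map R \<and>
     (\<forall>p. L p \<in> Vperp Y p \<and> R p \<in> Vperp Y p \<and>
          lor (L p) (L p) = 0 \<and> lor (R p) (R p) = 0 \<and> lor (L p) (R p) = -1 \<and>
          det (mk6 (Y p) (pd Y 1 p) (pd Y \<i> p) (Nvec Y p) (R p) (L p)) > 0)"

text \<open>Willmore functional W = (i/2) int <kappa, conj kappa> dz /\ dzbar over the
  fundamental domain [0,A] x [0,B] of the rectangular lattice generated by (A,0),(0,B);
  dz /\ dzbar = -2i du dv.\<close>
definition willmore_rect :: "(complex \<Rightarrow> real^6) \<Rightarrow> real \<Rightarrow> real \<Rightarrow> complex" where
  "willmore_rect Y A B =
     (\<i> / 2) * integral (cbox 0 (Complex A B))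
                 (\<lambda>w. clor (hopf Y w) (vcnj (hopf Y w)) * (- 2 * \<i>))"

definition descends :: "(complex \<Rightarrow> real^6) \<Rightarrow> real \<Rightarrow> real \<Rightarrow> bool" where
  "descends Y A B \<longleftrightarrow>
     (\<forall>w. (\<exists>c. c \<noteq> 0 \<and> Y (w + Complex A 0) = c *\<^sub>R Y w) \<and>
          (\<exists>c. c \<noteq> 0 \<and> Y (w + Complex 0 B) = c *\<^sub>R Y w))"

definition Yt :: "real \<Rightarrow> complex \<Rightarrow> real^6" where
  "Yt t w = (let \<theta> = Re w; \<phi> = Im w;
                 a = t * \<theta> / sqrt (t\<^sup>2 - 1); b = \<theta> / sqrt (t\<^sup>2 - 1)
             in mk6 (cos a * cos \<phi>) (cos a * sin \<phi>) (sin a * cos \<phi>) (sin a * sin \<phi>)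
                    (cos b) (sin b))"

end

theory Submission
  imports Defs
begin

lemma exhaust_6:
  fixes x :: 6
  shows "x = 1 \<or> x = 2 \<or> x = 3 \<or> x = 4 \<or> x = 5 \<or> x = 6"
proof (induct x)
  case (of_int z)
  then have "z = 0 \<or> z = 1 \<or> z = 2 \<or> z = 3 \<or> z = 4 \<or> z = 5" by fastforce
  then show ?case by auto
qed
lemma forall_6: "(\<forall>i::6. P i) \<longleftrightarrow> P 1 \<and> P 2 \<and> P 3 \<and> P 4 \<and> P 5 \<and> P 6"
proof
  assume h: "P 1 \<and> P 2 \<and> P 3 \<and> P 4 \<and> P 5 \<and> P 6"
  show "\<forall>i. P i"
  proof
    fix i :: 6
    from exhaust_6[of i] h show "P i" by (elim disjE) auto
  qed
qed simp
lemma vec_eq6: "(x::'a^6) = y \<longleftrightarrow> x$1 = y$1 \<and> x$2 = y$2 \<and> x$3 = y$3 \<and> x$4 = y$4 \<and> x$5 = y$5 \<and> x$6 = y$6"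
  unfolding vec_eq_iff forall_6 ..
lemma UNIV_6: "UNIV = {1, 2, 3, 4, 5, 6::6}"
  using exhaust_6 by auto

lemma sum_6: "sum f (UNIV::6 set) = f 1 + f 2 + f 3 + f 4 + f 5 + f 6"
  unfolding UNIV_6 by (simp add: ac_simps)


lemma mk6_nth [simp]:
  "mk6 a1 a2 a3 a4 a5 a6 $ 1 = a1" "mk6 a1 a2 a3 a4 a5 a6 $ 2 = a2"
  "mk6 a1 a2 a3 a4 a5 a6 $ 3 = a3" "mk6 a1 a2 a3 a4 a5 a6 $ 4 = a4"
  "mk6 a1 a2 a3 a4 a5 a6 $ 5 = a5" "mk6 a1 a2 a3 a4 a5 a6 $ 6 = a6"
  by (simp_all add: mk6_def)

lemma mk6_eq_iff [simp]: "mk6 a1 a2 a3 a4 a5 a6 = mk6 b1 b2 b3 b4 b5 b6 \<longleftrightarrow>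
   a1 = b1 \<and> a2 = b2 \<and> a3 = b3 \<and> a4 = b4 \<and> a5 = b5 \<and> a6 = b6"
  by (simp add: vec_eq6)

lemma mk6_add [simp]: "mk6 a1 a2 a3 a4 a5 a6 + mk6 b1 b2 b3 b4 b5 b6 = mk6 (a1+b1) (a2+b2) (a3+b3) (a4+b4) (a5+b5) (a6+b6)"
  by (simp add: vec_eq6)
lemma mk6_diff [simp]: "mk6 a1 a2 a3 a4 a5 a6 - mk6 b1 b2 b3 b4 b5 b6 = mk6 (a1-b1) (a2-b2) (a3-b3) (a4-b4) (a5-b5) (a6-b6)"
  by (simp add: vec_eq6)
lemma mk6_scaleR [simp]: "r *\<^sub>R mk6 a1 a2 a3 a4 a5 a6 = mk6 (r*a1) (r*a2) (r*a3) (r*a4) (r*a5) (r*a6)"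
  by (simp add: vec_eq6)
lemma mk6_smult [simp]: "r *s mk6 a1 a2 a3 a4 a5 a6 = mk6 (r*a1) (r*a2) (r*a3) (r*a4) (r*a5) (r*a6)"
  by (simp add: vec_eq6)
lemma mk6_zero: "0 = mk6 0 0 0 0 0 0"
  by (simp add: vec_eq6)
lemma mk6_axis: "mk6 a1 a2 a3 a4 a5 a6 = a1 *\<^sub>R axis 1 1 + a2 *\<^sub>R axis 2 1 + a3 *\<^sub>R axis 3 1 + a4 *\<^sub>R axis 4 1 + a5 *\<^sub>R axis 5 1 + (a6::real) *\<^sub>R axis 6 1"
  by (simp add: vec_eq6 axis_def)

lemma sig_vals [simp]: "sig 1 = 1" "sig 2 = 1" "sig 3 = 1" "sig 4 = 1" "sig 5 = -1" "sig 6 = -1"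
  by (simp_all add: sig_def)

lemma lor_mk6 [simp]: "lor (mk6 a1 a2 a3 a4 a5 a6) (mk6 b1 b2 b3 b4 b5 b6) = a1*b1 + a2*b2 + a3*b3 + a4*b4 - a5*b5 - a6*b6"
  by (simp add: lor_def sum_6)

lemma has_derivative_mk6:
  assumes "(g1 has_derivative g1') F" "(g2 has_derivative g2') F" "(g3 has_derivative g3') F"
    "(g4 has_derivative g4') F" "(g5 has_derivative g5') F" "(g6 has_derivative g6') F"
  shows "((\<lambda>x. mk6 (g1 x) (g2 x) (g3 x) (g4 x) (g5 x) (g6 x) :: real^6) has_derivative
          (\<lambda>h. mk6 (g1' h) (g2' h) (g3' h) (g4' h) (g5' h) (g6' h))) F"
  unfolding mk6_axis
  by (intro has_derivative_add has_derivative_scaleR_left assms)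

definition cb :: "real \<Rightarrow> real^6 \<Rightarrow> complex \<Rightarrow> real^6" where
"cb t \<alpha> w = (let a = (t / sqrt (t\<^sup>2 - 1)) * Re w; b = (1 / sqrt (t\<^sup>2 - 1)) * Re w; \<phi> = Im w in
  mk6 (\<alpha>$1 * (cos a * cos \<phi>) - \<alpha>$2 * (cos a * sin \<phi>) - \<alpha>$3 * (sin a * cos \<phi>) + \<alpha>$4 * (sin a * sin \<phi>))
      (\<alpha>$1 * (cos a * sin \<phi>) + \<alpha>$2 * (cos a * cos \<phi>) - \<alpha>$3 * (sin a * sin \<phi>) - \<alpha>$4 * (sin a * cos \<phi>))
      (\<alpha>$1 * (sin a * cos \<phi>) - \<alpha>$2 * (sin a * sin \<phi>) + \<alpha>$3 * (cos a * cos \<phi>) - \<alpha>$4 * (cos a * sin \<phi>))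
      (\<alpha>$1 * (sin a * sin \<phi>) + \<alpha>$2 * (sin a * cos \<phi>) + \<alpha>$3 * (cos a * sin \<phi>) + \<alpha>$4 * (cos a * cos \<phi>))
      (\<alpha>$5 * cos b - \<alpha>$6 * sin b)
      (\<alpha>$5 * sin b + \<alpha>$6 * cos b))"

definition kk :: "real \<Rightarrow> real" where "kk t = t / sqrt (t\<^sup>2 - 1)"
definition cc :: "real \<Rightarrow> real" where "cc t = 1 / sqrt (t\<^sup>2 - 1)"

definition Dth :: "real \<Rightarrow> real^6 \<Rightarrow> real^6" where
  "Dth t \<alpha> = mk6 (- kk t * \<alpha>$3) (- kk t * \<alpha>$4) (kk t * \<alpha>$1) (kk t * \<alpha>$2) (- cc t * \<alpha>$6) (cc t * \<alpha>$5)"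

definition Dph :: "real^6 \<Rightarrow> real^6" where
  "Dph \<alpha> = mk6 (- \<alpha>$2) (\<alpha>$1) (- \<alpha>$4) (\<alpha>$3) 0 0"

definition Dv :: "real \<Rightarrow> complex \<Rightarrow> real^6 \<Rightarrow> real^6" where
  "Dv t h \<alpha> = Re h *\<^sub>R Dth t \<alpha> + Im h *\<^sub>R Dph \<alpha>"

lemma cb_deriv: "(cb t \<alpha> has_derivative (\<lambda>h. cb t (Dv t h \<alpha>) w)) (at w)"
  unfolding cb_def[abs_def] Let_def
  apply (rule has_derivative_eq_rhs)
   apply (rule has_derivative_mk6; (rule derivative_eq_intros refl)+)
  apply (rule ext)
  apply (simp only: Dv_def Dth_def Dph_def mk6_scaleR mk6_add mk6_nth mk6_eq_iff)
  apply (intro conjI)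
  apply (simp_all add: algebra_simps kk_def cc_def)
  done

lemma pd_deriv:
  assumes "(F has_derivative F') (at p)"
  shows "pd F d p = F' d"
proof -
  have bl: "bounded_linear F'" using assms by (rule has_derivative_bounded_linear)
  have "((\<lambda>s::real. p + complex_of_real s * d) has_derivative (\<lambda>s. complex_of_real s * d)) (at 0)"
    by (rule derivative_eq_intros refl)+ simp
  moreover have "(F has_derivative F') (at ((\<lambda>s::real. p + complex_of_real s * d) 0))"
    using assms by simp
  ultimately have "((\<lambda>s::real. F (p + complex_of_real s * d)) has_derivative (\<lambda>s. F' (complex_of_real s * d))) (at 0)"
    by (rule has_derivative_compose[where f="\<lambda>s::real. p + complex_of_real s * d", simplified])
  moreover have "(\<lambda>s. F' (complex_of_real s * d)) = (\<lambda>s. s *\<^sub>R F' d)"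
  proof
    fix s :: real
    have "complex_of_real s * d = s *\<^sub>R d" by (simp add: scaleR_conv_of_real)
    then show "F' (complex_of_real s * d) = s *\<^sub>R F' d"
      using linear.scaleR[OF bounded_linear.linear[OF bl]] by simp
  qed
  ultimately have "((\<lambda>s::real. F (p + complex_of_real s * d)) has_vector_derivative F' d) (at 0)"
    by (simp add: has_vector_derivative_def)
  then show ?thesis unfolding pd_def by (rule vector_derivative_at)
qed

lemma cb_add: "cb t (\<alpha> + \<beta>) w = cb t \<alpha> w + cb t \<beta> w"
  by (simp add: cb_def Let_def algebra_simps)
lemma cb_diff: "cb t (\<alpha> - \<beta>) w = cb t \<alpha> w - cb t \<beta> w"
  by (simp add: cb_def Let_def algebra_simps)
lemma cb_scaleR: "cb t (r *\<^sub>R \<alpha>) w = r *\<^sub>R cb t \<alpha> w"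
  by (simp add: cb_def Let_def algebra_simps)
lemma cb_zero: "cb t 0 w = 0"
  by (simp add: cb_def Let_def mk6_zero)
lemma cb_uminus: "cb t (- \<alpha>) w = - cb t \<alpha> w"
  by (simp add: cb_def Let_def algebra_simps vec_eq6)

lemma pd_cb: "pd (cb t \<alpha>) d w = cb t (Dv t d \<alpha>) w"
  by (rule pd_deriv[OF cb_deriv])

lemma lor_add_left: "lor (x + y) z = lor x z + lor y z"
  by (simp add: lor_def algebra_simps sum.distrib)
lemma lor_add_right: "lor z (x + y) = lor z x + lor z y"
  by (simp add: lor_def algebra_simps sum.distrib)
lemma lor_diff_left: "lor (x - y) z = lor x z - lor y z"
  by (simp add: lor_def algebra_simps sum_subtractf)
lemma lor_diff_right: "lor z (x - y) = lor z x - lor z y"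
  by (simp add: lor_def algebra_simps sum_subtractf)
lemma lor_scaleR_left: "lor (r *\<^sub>R x) z = r * lor x z"
  by (simp add: lor_def algebra_simps sum_distrib_left)
lemma lor_scaleR_right: "lor z (r *\<^sub>R x) = r * lor z x"
  by (simp add: lor_def algebra_simps sum_distrib_left)
lemma lor_sym: "lor x y = lor y x"
  by (simp add: lor_def algebra_simps)
lemma lor_zero_left [simp]: "lor 0 x = 0" and lor_zero_right [simp]: "lor x 0 = 0"
  by (simp_all add: lor_def)

lemma lor_expand: "lor x y = x$1*y$1 + x$2*y$2 + x$3*y$3 + x$4*y$4 - x$5*y$5 - x$6*y$6"
  by (simp add: lor_def sum_6)

lemma lor_cb_aux:
  fixes A S C D E F :: real
  assumes "A^2 + S^2 = 1" "C^2 + D^2 = 1" "E^2 + F^2 = 1"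
  shows "(a1 * (A * C) - a2 * (A * D) - a3 * (S * C) + a4 * (S * D)) *
         (b1 * (A * C) - b2 * (A * D) - b3 * (S * C) + b4 * (S * D)) +
         (a1 * (A * D) + a2 * (A * C) - a3 * (S * D) - a4 * (S * C)) *
         (b1 * (A * D) + b2 * (A * C) - b3 * (S * D) - b4 * (S * C)) +
         (a1 * (S * C) - a2 * (S * D) + a3 * (A * C) - a4 * (A * D)) *
         (b1 * (S * C) - b2 * (S * D) + b3 * (A * C) - b4 * (A * D)) +
         (a1 * (S * D) + a2 * (S * C) + a3 * (A * D) + a4 * (A * C)) *
         (b1 * (S * D) + b2 * (S * C) + b3 * (A * D) + b4 * (A * C)) -
         (a5 * E - a6 * F) * (b5 * E - b6 * F) -
         (a5 * F + a6 * E) * (b5 * F + b6 * E) =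
         a1*b1 + a2*b2 + a3*b3 + a4*b4 - a5*b5 - a6*b6"
proof -
  have "(a1 * (A * C) - a2 * (A * D) - a3 * (S * C) + a4 * (S * D)) *
         (b1 * (A * C) - b2 * (A * D) - b3 * (S * C) + b4 * (S * D)) +
         (a1 * (A * D) + a2 * (A * C) - a3 * (S * D) - a4 * (S * C)) *
         (b1 * (A * D) + b2 * (A * C) - b3 * (S * D) - b4 * (S * C)) +
         (a1 * (S * C) - a2 * (S * D) + a3 * (A * C) - a4 * (A * D)) *
         (b1 * (S * C) - b2 * (S * D) + b3 * (A * C) - b4 * (A * D)) +
         (a1 * (S * D) + a2 * (S * C) + a3 * (A * D) + a4 * (A * C)) *
         (b1 * (S * D) + b2 * (S * C) + b3 * (A * D) + b4 * (A * C)) -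
         (a5 * E - a6 * F) * (b5 * E - b6 * F) -
         (a5 * F + a6 * E) * (b5 * F + b6 * E) =
         (a1*b1 + a2*b2 + a3*b3 + a4*b4) * ((A^2 + S^2) * (C^2 + D^2)) - (a5*b5 + a6*b6) * (E^2 + F^2)"
    by algebra
  then show ?thesis using assms by simp
qed

lemma lor_cb: "lor (cb t \<alpha> w) (cb t \<beta> w) = lor \<alpha> \<beta>"
  unfolding cb_def Let_def lor_expand mk6_nth
  by (rule lor_cb_aux) simp_all

definition ccb :: "real \<Rightarrow> real^6 \<Rightarrow> real^6 \<Rightarrow> complex \<Rightarrow> complex^6" where
  "ccb t \<alpha> \<beta> w = cvec (cb t \<alpha> w) + \<i> *s cvec (cb t \<beta> w)"

lemma ccb_nth: "ccb t \<alpha> \<beta> w $ j = Complex (cb t \<alpha> w $ j) (cb t \<beta> w $ j)"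
  by (simp add: ccb_def cvec_def complex_eq_iff)

lemma ccb_eqI: "\<alpha> = \<gamma> \<Longrightarrow> \<beta> = \<delta> \<Longrightarrow> ccb t \<alpha> \<beta> w = ccb t \<gamma> \<delta> w"
  by simp

lemma ccb_add: "ccb t \<alpha> \<beta> w + ccb t \<gamma> \<delta> w = ccb t (\<alpha> + \<gamma>) (\<beta> + \<delta>) w"
  by (simp add: vec_eq_iff ccb_nth cb_add complex_eq_iff)
lemma ccb_diff: "ccb t \<alpha> \<beta> w - ccb t \<gamma> \<delta> w = ccb t (\<alpha> - \<gamma>) (\<beta> - \<delta>) w"
  by (simp add: vec_eq_iff ccb_nth cb_diff complex_eq_iff)
lemma ccb_smult: "z *s ccb t \<alpha> \<beta> w = ccb t (Re z *\<^sub>R \<alpha> - Im z *\<^sub>R \<beta>) (Im z *\<^sub>R \<alpha> + Re z *\<^sub>R \<beta>) w"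
  by (simp add: vec_eq_iff ccb_nth cb_add cb_diff cb_scaleR complex_eq_iff)
lemma cvec_cb: "cvec (cb t \<alpha> w) = ccb t \<alpha> 0 w"
  by (simp add: vec_eq_iff ccb_nth cb_zero cvec_def complex_eq_iff)
lemma vRe_ccb [simp]: "vRe (ccb t \<alpha> \<beta> w) = cb t \<alpha> w"
  by (simp add: vec_eq_iff ccb_nth vRe_def)
lemma vIm_ccb [simp]: "vIm (ccb t \<alpha> \<beta> w) = cb t \<beta> w"
  by (simp add: vec_eq_iff ccb_nth vIm_def)
lemma vcnj_ccb: "vcnj (ccb t \<alpha> \<beta> w) = ccb t \<alpha> (- \<beta>) w"
  by (simp add: vec_eq_iff ccb_nth vcnj_def cb_uminus complex_eq_iff)
lemma ccb_zero: "ccb t 0 0 w = 0"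
  by (simp add: vec_eq_iff ccb_nth cb_zero complex_eq_iff)
lemma ccb_eq_zero_iff: "ccb t \<alpha> \<beta> w = 0 \<longleftrightarrow> cb t \<alpha> w = 0 \<and> cb t \<beta> w = 0"
  by (simp add: vec_eq_iff ccb_nth complex_eq_iff) blast

lemma clor_ccb: "clor (ccb t \<alpha> \<beta> w) (ccb t \<gamma> \<delta> w) =
   Complex (lor \<alpha> \<gamma> - lor \<beta> \<delta>) (lor \<alpha> \<delta> + lor \<beta> \<gamma>)"
proof -
  have "clor (ccb t \<alpha> \<beta> w) (ccb t \<gamma> \<delta> w) =
     Complex (lor (cb t \<alpha> w) (cb t \<gamma> w) - lor (cb t \<beta> w) (cb t \<delta> w))
             (lor (cb t \<alpha> w) (cb t \<delta> w) + lor (cb t \<beta> w) (cb t \<gamma> w))"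
    by (simp add: clor_def lor_def ccb_nth complex_eq_iff sum_6 algebra_simps)
  then show ?thesis by (simp add: lor_cb)
qed

lemma bl_cvec: "bounded_linear cvec"
  apply (rule linear_conv_bounded_linear[THEN iffD1])
  apply (rule linearI)
  apply (simp_all add: cvec_def vec_eq_iff)
  apply (simp add: scaleR_conv_of_real)
  done

lemma bl_ismult: "bounded_linear (\<lambda>x::complex^6. \<i> *s x)"
  apply (rule linear_conv_bounded_linear[THEN iffD1])
  apply (rule linearI)
  apply (simp_all add: vec_eq_iff algebra_simps scaleR_conv_of_real)
  done

lemma ccb_deriv: "(ccb t \<alpha> \<beta> has_derivative (\<lambda>h. ccb t (Dv t h \<alpha>) (Dv t h \<beta>) w)) (at w)"
proof -
  have d1: "((\<lambda>w. cvec (cb t \<alpha> w)) has_derivative (\<lambda>h. cvec (cb t (Dv t h \<alpha>) w))) (at w)"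
    by (rule bounded_linear.has_derivative[OF bl_cvec cb_deriv])
  have d2: "((\<lambda>w. cvec (cb t \<beta> w)) has_derivative (\<lambda>h. cvec (cb t (Dv t h \<beta>) w))) (at w)"
    by (rule bounded_linear.has_derivative[OF bl_cvec cb_deriv])
  have d3: "((\<lambda>w. \<i> *s cvec (cb t \<beta> w)) has_derivative (\<lambda>h. \<i> *s cvec (cb t (Dv t h \<beta>) w))) (at w)"
    by (rule bounded_linear.has_derivative[OF bl_ismult d2])
  show ?thesis unfolding ccb_def[abs_def]
    by (rule has_derivative_add[OF d1 d3])
qed

lemma pd_ccb: "pd (ccb t \<alpha> \<beta>) d w = ccb t (Dv t d \<alpha>) (Dv t d \<beta>) w"
  by (rule pd_deriv[OF ccb_deriv])

lemma Dv_1 [simp]: "Dv t 1 \<alpha> = Dth t \<alpha>" and Dv_i [simp]: "Dv t \<i> \<alpha> = Dph \<alpha>"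
  by (simp_all add: Dv_def)

lemma dz_ccb: "dz (ccb t \<alpha> \<beta>) w = ccb t ((1/2) *\<^sub>R (Dth t \<alpha> + Dph \<beta>)) ((1/2) *\<^sub>R (Dth t \<beta> - Dph \<alpha>)) w"
  by (simp add: dz_def pd_ccb vec_eq_iff ccb_nth cb_add cb_diff cb_scaleR complex_eq_iff)

lemma dzb_ccb: "dzb (ccb t \<alpha> \<beta>) w = ccb t ((1/2) *\<^sub>R (Dth t \<alpha> - Dph \<beta>)) ((1/2) *\<^sub>R (Dth t \<beta> + Dph \<alpha>)) w"
  by (simp add: dzb_def pd_ccb vec_eq_iff ccb_nth cb_add cb_diff cb_scaleR complex_eq_iff)

lemma dz_ccb_fun: "dz (ccb t \<alpha> \<beta>) = ccb t ((1/2) *\<^sub>R (Dth t \<alpha> + Dph \<beta>)) ((1/2) *\<^sub>R (Dth t \<beta> - Dph \<alpha>))"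
  by (rule ext) (rule dz_ccb)
lemma dzb_ccb_fun: "dzb (ccb t \<alpha> \<beta>) = ccb t ((1/2) *\<^sub>R (Dth t \<alpha> - Dph \<beta>)) ((1/2) *\<^sub>R (Dth t \<beta> + Dph \<alpha>))"
  by (rule ext) (rule dzb_ccb)
lemma pd_cb_fun: "pd (cb t \<alpha>) d = cb t (Dv t d \<alpha>)"
  by (rule ext) (rule pd_cb)

lemma iterpd_cb: "\<exists>\<beta>. iterpd ds (cb t \<alpha>) = cb t \<beta>"
proof (induction ds)
  case Nil then show ?case by auto
next
  case (Cons d ds)
  then obtain \<beta> where "iterpd ds (cb t \<alpha>) = cb t \<beta>" by blast
  then show ?case by (auto simp: pd_cb_fun)
qed

lemma smooth_cb: "smooth_map (cb t \<alpha>)"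
  unfolding smooth_map_def
proof (intro allI)
  fix ds p
  obtain \<beta> where "iterpd ds (cb t \<alpha>) = cb t \<beta>" using iterpd_cb by blast
  then show "iterpd ds (cb t \<alpha>) differentiable at p"
    using cb_deriv by (auto simp: differentiable_def)
qed


lemma Dth_mk6 [simp]: "Dth t (mk6 a1 a2 a3 a4 a5 a6) = mk6 (- kk t * a3) (- kk t * a4) (kk t * a1) (kk t * a2) (- cc t * a6) (cc t * a5)"
  by (simp add: Dth_def)
lemma Dph_mk6 [simp]: "Dph (mk6 a1 a2 a3 a4 a5 a6) = mk6 (- a2) a1 (- a4) a3 0 0"
  by (simp add: Dph_def)
lemma mk6_uminus [simp]: "- mk6 a1 a2 a3 a4 a5 a6 = mk6 (-a1) (-a2) (-a3) (-a4) (-a5) (-a6)"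
  by (simp add: vec_eq6)
lemma Dth_zero [simp]: "Dth t 0 = 0" and Dph_zero [simp]: "Dph 0 = 0"
  by (simp_all add: Dth_def Dph_def mk6_zero)

lemma span4: "x \<in> span {u1,u2,u3,u4} \<longleftrightarrow> (\<exists>k1 k2 k3 k4. x = k1 *\<^sub>R u1 + k2 *\<^sub>R u2 + k3 *\<^sub>R u3 + k4 *\<^sub>R u4)"
  by (simp add: span_insert span_empty algebra_simps eq_diff_eq)

definition aY :: "real^6" where "aY = mk6 1 0 0 0 1 0"
definition aT :: "real \<Rightarrow> real^6" where "aT t = mk6 0 0 (kk t) 0 0 (cc t)"
definition aP :: "real^6" where "aP = mk6 0 1 0 0 0 0"
definition aZ :: "real \<Rightarrow> real^6" where "aZ t = mk6 (- (kk t * kk t + 1) / 4) 0 0 0 (- (cc t * cc t) / 4) 0"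
definition aN :: "real^6" where "aN = mk6 (-1/2) 0 0 0 (1/2) 0"
definition aE :: "real^6" where "aE = mk6 0 0 0 1 0 0"
definition aF :: "real \<Rightarrow> real^6" where "aF t = mk6 0 0 (cc t) 0 0 (kk t)"
definition aL :: "real \<Rightarrow> real^6" where "aL t = mk6 0 0 (- cc t / sqrt 2) (1 / sqrt 2) 0 (- kk t / sqrt 2)"
definition aR :: "real \<Rightarrow> real^6" where "aR t = mk6 0 0 (- cc t / sqrt 2) (- 1 / sqrt 2) 0 (- kk t / sqrt 2)"
definition gK :: "real \<Rightarrow> real^6" where "gK t = mk6 0 0 0 (- kk t / 2) 0 0"

context
  fixes t :: real
  assumes t1: "t > 1"
begin

lemma s_pos: "sqrt (t\<^sup>2 - 1) > 0"
  using t1 by (simp add: power_strict_mono[of 1 t 2, simplified])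
lemma t2_pos: "t\<^sup>2 - 1 > 0"
  using s_pos by simp
lemma cc_pos: "cc t > 0" using s_pos by (simp add: cc_def)
lemma kk_pos: "kk t > 0" using s_pos t1 by (simp add: kk_def)
lemma kk_cc: "kk t = t * cc t" by (simp add: kk_def cc_def)
lemma kc: "kk t * kk t = 1 + cc t * cc t"
proof -
  have ss: "sqrt (t\<^sup>2 - 1) * sqrt (t\<^sup>2 - 1) = t\<^sup>2 - 1"
    using real_sqrt_mult_self[of "t\<^sup>2 - 1"] abs_of_pos[OF t2_pos] by simp
  have ab: "\<bar>t * t - 1\<bar> = t * t - 1" using t2_pos by (simp add: power2_eq_square)
  have "kk t * kk t = t\<^sup>2 / (t\<^sup>2 - 1)" by (simp add: kk_def ss power2_eq_square ab)
  moreover have "cc t * cc t = 1 / (t\<^sup>2 - 1)" by (simp add: cc_def ss abs_of_pos[OF t2_pos])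
  moreover have "1 + 1/(t\<^sup>2 - 1) = t\<^sup>2/(t\<^sup>2 - 1)" using t2_pos by (simp add: field_simps)
  ultimately show ?thesis by simp
qed
lemma cc_sq: "cc t * cc t = 1 / (t\<^sup>2 - 1)"
proof -
  have ss: "sqrt (t\<^sup>2 - 1) * sqrt (t\<^sup>2 - 1) = t\<^sup>2 - 1"
    using real_sqrt_mult_self[of "t\<^sup>2 - 1"] abs_of_pos[OF t2_pos] by simp
  show ?thesis by (simp add: cc_def ss abs_of_pos[OF t2_pos])
qed

lemma Yt_cb: "Yt t = cb t aY"
  by (rule ext) (simp add: Yt_def cb_def Let_def aY_def)

lemma pdY1: "pd (Yt t) 1 = cb t (aT t)"
  by (simp add: Yt_cb pd_cb_fun aY_def aT_def)
lemma pdYi: "pd (Yt t) \<i> = cb t aP"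
  by (simp add: Yt_cb pd_cb_fun aY_def aP_def)

lemma Yzzb_eq: "Yzzb (Yt t) p = cb t (aZ t) p"
proof -
  have "Yzzb (Yt t) p = cb t ((1/4) *\<^sub>R (Dth t (aT t) + Dph aP)) p"
    by (simp add: Yzzb_def pdY1 pdYi pd_cb cb_add cb_scaleR)
  also have "(1/4) *\<^sub>R (Dth t (aT t) + Dph aP) = aZ t"
    by (simp add: aT_def aP_def aZ_def)
  finally show ?thesis .
qed

lemma cvecY: "cvec \<circ> Yt t = ccb t aY 0"
  by (rule ext) (simp add: Yt_cb cvec_cb)

lemma Yz_eq: "Yz (Yt t) = ccb t ((1/2) *\<^sub>R aT t) (- (1/2) *\<^sub>R aP)"
  by (simp add: Yz_def cvecY dz_ccb_fun aY_def aT_def aP_def)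
lemma Yzb_eq: "Yzb (Yt t) = ccb t ((1/2) *\<^sub>R aT t) ((1/2) *\<^sub>R aP)"
  by (simp add: Yzb_def cvecY dzb_ccb_fun aY_def aT_def aP_def)

lemma Yzz_eq: "Yzz (Yt t) = ccb t (- (cc t * cc t / 4) *\<^sub>R aY) (gK t)"
proof -
  have "Yzz (Yt t) = dz (dz (ccb t aY 0))" by (simp add: Yzz_def cvecY)
  also have "\<dots> = ccb t (- (cc t * cc t / 4) *\<^sub>R aY) (gK t)"
    unfolding dz_ccb_fun
    using kc by (simp add: aY_def gK_def field_simps)
  finally show ?thesis .
qed

end


lemma vRe_diff: "vRe (a - b) = vRe a - vRe b" by (simp add: vRe_def vec_eq_iff)
lemma vIm_diff: "vIm (a - b) = vIm a - vIm b" by (simp add: vIm_def vec_eq_iff)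
lemma vReIm_zero: "vRe a = 0 \<Longrightarrow> vIm a = 0 \<Longrightarrow> a = 0"
  by (simp add: vRe_def vIm_def vec_eq_iff complex_eq_iff)

lemma lor_minus_left: "lor (- x) y = - lor x y" and lor_minus_right: "lor y (- x) = - lor y x"
  by (simp_all add: lor_def sum_negf)

context
  fixes t :: real
  assumes t1: "t > 1"
begin

lemma lor_tab:
  "lor aY aY = 0" "lor aY (aT t) = 0" "lor aY aP = 0" "lor aY (aZ t) = -1/2"
  "lor (aT t) aY = 0" "lor (aT t) (aT t) = 1" "lor (aT t) aP = 0" "lor (aT t) (aZ t) = 0"
  "lor aP aY = 0" "lor aP (aT t) = 0" "lor aP aP = 1" "lor aP (aZ t) = 0"
  "lor (aZ t) aY = -1/2" "lor (aZ t) (aT t) = 0" "lor (aZ t) aP = 0"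
  using kc[OF t1]
  by (simp_all add: aY_def aT_def aP_def aZ_def field_simps)

lemma lor_ZZ: "lor (aZ t) (aZ t) = kk t * kk t / 4"
  unfolding aZ_def lor_mk6 using kc[OF t1] by algebra

lemma lor_gK: "lor (gK t) aY = 0" "lor (gK t) (aZ t) = 0" "lor (gK t) (aT t) = 0" "lor (gK t) aP = 0"
  by (simp_all add: gK_def aY_def aZ_def aT_def aP_def)

lemma Vsp_eq: "Vsp (Yt t) p = span {cb t aY p, cb t (aT t) p, cb t aP p, cb t (aZ t) p}"
  unfolding Vsp_def pdY1[OF t1] pdYi[OF t1] Yzzb_eq[OF t1] by (simp add: Yt_cb[OF t1])

lemma Vsp_mem: "x \<in> Vsp (Yt t) p \<longleftrightarrow> (\<exists>k1 k2 k3 k4. x = cb t (k1 *\<^sub>R aY + k2 *\<^sub>R aT t + k3 *\<^sub>R aP + k4 *\<^sub>R aZ t) p)"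
  unfolding Vsp_eq span4 by (simp add: cb_add cb_scaleR)

lemma Vperp_mem: "x \<in> Vperp (Yt t) p \<longleftrightarrow> lor x (cb t aY p) = 0 \<and> lor x (cb t (aT t) p) = 0 \<and>
      lor x (cb t aP p) = 0 \<and> lor x (cb t (aZ t) p) = 0"
proof
  assume "x \<in> Vperp (Yt t) p"
  then show "lor x (cb t aY p) = 0 \<and> lor x (cb t (aT t) p) = 0 \<and> lor x (cb t aP p) = 0 \<and> lor x (cb t (aZ t) p) = 0"
    unfolding Vperp_def Vsp_eq by (auto intro: span_base)
next
  assume h: "lor x (cb t aY p) = 0 \<and> lor x (cb t (aT t) p) = 0 \<and> lor x (cb t aP p) = 0 \<and> lor x (cb t (aZ t) p) = 0"
  show "x \<in> Vperp (Yt t) p"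
    unfolding Vperp_def Vsp_eq
  proof (intro CollectI ballI)
    fix w assume "w \<in> span {cb t aY p, cb t (aT t) p, cb t aP p, cb t (aZ t) p}"
    then obtain k1 k2 k3 k4 where "w = k1 *\<^sub>R cb t aY p + k2 *\<^sub>R cb t (aT t) p + k3 *\<^sub>R cb t aP p + k4 *\<^sub>R cb t (aZ t) p"
      unfolding span4 by blast
    then show "lor x w = 0" using h by (simp add: lor_add_right lor_scaleR_right)
  qed
qed

lemma Vperp_cb: "cb t \<gamma> p \<in> Vperp (Yt t) p \<longleftrightarrow> lor \<gamma> aY = 0 \<and> lor \<gamma> (aT t) = 0 \<and> lor \<gamma> aP = 0 \<and> lor \<gamma> (aZ t) = 0"
  by (simp add: Vperp_mem lor_cb)

lemma VV0:
  assumes "x \<in> Vsp (Yt t) p" "x \<in> Vperp (Yt t) p"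
  shows "x = 0"
proof -
  from assms(1) obtain k1 k2 k3 k4 where x: "x = cb t (k1 *\<^sub>R aY + k2 *\<^sub>R aT t + k3 *\<^sub>R aP + k4 *\<^sub>R aZ t) p"
    unfolding Vsp_mem by blast
  from assms(2) have "lor (k1 *\<^sub>R aY + k2 *\<^sub>R aT t + k3 *\<^sub>R aP + k4 *\<^sub>R aZ t) aY = 0 \<and>
     lor (k1 *\<^sub>R aY + k2 *\<^sub>R aT t + k3 *\<^sub>R aP + k4 *\<^sub>R aZ t) (aT t) = 0 \<and>
     lor (k1 *\<^sub>R aY + k2 *\<^sub>R aT t + k3 *\<^sub>R aP + k4 *\<^sub>R aZ t) aP = 0 \<and>
     lor (k1 *\<^sub>R aY + k2 *\<^sub>R aT t + k3 *\<^sub>R aP + k4 *\<^sub>R aZ t) (aZ t) = 0"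
    unfolding x Vperp_cb .
  then have "k4 = 0 \<and> k2 = 0 \<and> k3 = 0 \<and> k1 = 0"
    by (simp add: lor_add_left lor_scaleR_left lor_tab lor_ZZ) auto
  then show ?thesis using x by (simp add: cb_zero)
qed

lemma Vperp_diff: "x \<in> Vperp (Yt t) p \<Longrightarrow> y \<in> Vperp (Yt t) p \<Longrightarrow> x - y \<in> Vperp (Yt t) p"
  by (simp add: Vperp_mem lor_diff_left)

lemma Vsp_diff: "x \<in> Vsp (Yt t) p \<Longrightarrow> y \<in> Vsp (Yt t) p \<Longrightarrow> x - y \<in> Vsp (Yt t) p"
  unfolding Vsp_eq by (rule span_diff)

lemma projperp_eq:
  assumes "k \<in> cVperp (Yt t) p" "w - k \<in> cVsp (Yt t) p"
  shows "projperp (Yt t) p w = k"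
  unfolding projperp_def
proof (rule the_equality)
  show "k \<in> cVperp (Yt t) p \<and> w - k \<in> cVsp (Yt t) p" using assms by simp
next
  fix k' assume h: "k' \<in> cVperp (Yt t) p \<and> w - k' \<in> cVsp (Yt t) p"
  have e: "k' - k = (w - k) - (w - k')" by simp
  have "vRe (k' - k) \<in> Vperp (Yt t) p" "vIm (k' - k) \<in> Vperp (Yt t) p"
    using h assms(1) by (auto simp: cVperp_def vRe_diff vIm_diff intro: Vperp_diff)
  moreover have "vRe (k' - k) \<in> Vsp (Yt t) p" "vIm (k' - k) \<in> Vsp (Yt t) p"
    using h assms(2) unfolding e cVsp_def vRe_diff[of "w - k"] vIm_diff[of "w - k"]
    by (auto intro: Vsp_diff)
  ultimately have "vRe (k' - k) = 0" "vIm (k' - k) = 0" by (auto intro: VV0)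
  then have "k' - k = 0" by (rule vReIm_zero)
  then show "k' = k" by simp
qed

lemma cVperp_ccb: "ccb t \<alpha> \<beta> p \<in> cVperp (Yt t) p \<longleftrightarrow> cb t \<alpha> p \<in> Vperp (Yt t) p \<and> cb t \<beta> p \<in> Vperp (Yt t) p"
  by (simp add: cVperp_def)
lemma cVsp_ccb: "ccb t \<alpha> \<beta> p \<in> cVsp (Yt t) p \<longleftrightarrow> cb t \<alpha> p \<in> Vsp (Yt t) p \<and> cb t \<beta> p \<in> Vsp (Yt t) p"
  by (simp add: cVsp_def)

lemma gK_perp: "cb t (gK t) p \<in> Vperp (Yt t) p"
  by (simp add: Vperp_cb gK_def aY_def aT_def aP_def aZ_def)
lemma zero_perp: "cb t 0 p \<in> Vperp (Yt t) p"
  by (simp add: Vperp_cb)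

lemma Yzz_decomp_unique:
  assumes "k \<in> cVperp (Yt t) p" "Yzz (Yt t) p = (- s/2) *s cvec (Yt t p) + k"
  shows "s = complex_of_real (cc t * cc t / 2) \<and> k = ccb t 0 (gK t) p"
proof -
  define z where "z = - s / 2"
  have k: "k = ccb t (- (cc t * cc t / 4) *\<^sub>R aY - Re z *\<^sub>R aY) (gK t - Im z *\<^sub>R aY) p"
  proof -
    have "k = Yzz (Yt t) p - z *s cvec (Yt t p)" using assms(2) unfolding z_def by simp
    also have "\<dots> = ccb t (- (cc t * cc t / 4) *\<^sub>R aY - Re z *\<^sub>R aY) (gK t - Im z *\<^sub>R aY) p"
      unfolding Yzz_eq[OF t1] unfolding Yt_cb[OF t1] cvec_cb ccb_smult ccb_diff by simp
    finally show ?thesis .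
  qed
  from assms(1) have "lor (- (cc t * cc t / 4) *\<^sub>R aY - Re z *\<^sub>R aY) (aZ t) = 0"
     "lor (gK t - Im z *\<^sub>R aY) (aZ t) = 0"
    unfolding k cVperp_ccb Vperp_cb by auto
  then have "Re z = - (cc t * cc t / 4)" "Im z = 0"
    by (simp_all add: lor_diff_left lor_scaleR_left lor_minus_left lor_tab lor_ZZ lor_gK)
  then have "s = complex_of_real (cc t * cc t / 2)"
    unfolding z_def by (simp add: complex_eq_iff)
  moreover have "k = ccb t 0 (gK t) p"
    unfolding k using \<open>Re z = _\<close> \<open>Im z = 0\<close> by simp
  ultimately show ?thesis by simp
qed

lemma Yzz_decomp: "Yzz (Yt t) p = (- complex_of_real (cc t * cc t / 2) / 2) *s cvec (Yt t p) + ccb t 0 (gK t) p"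
  unfolding Yzz_eq[OF t1] unfolding Yt_cb[OF t1] cvec_cb ccb_smult ccb_add
  by (rule ccb_eqI) (simp_all add: field_simps)

lemma kappa_perp: "ccb t 0 (gK t) p \<in> cVperp (Yt t) p"
  by (simp add: cVperp_ccb gK_perp zero_perp)

lemma hopf_eq: "hopf (Yt t) p = ccb t 0 (gK t) p"
  unfolding hopf_def
  apply (rule the_equality)
  using kappa_perp Yzz_decomp apply blast
  using Yzz_decomp_unique by blast

lemma hopf_fun: "hopf (Yt t) = ccb t 0 (gK t)"
  by (rule ext) (rule hopf_eq)

lemma sfun_eq: "sfun (Yt t) p = complex_of_real (cc t * cc t / 2)"
  unfolding sfun_def
  apply (rule the_equality)
  using kappa_perp Yzz_decomp apply blast
  using Yzz_decomp_unique by blast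

end


lemma cb_at0: "cb t \<alpha> 0 = \<alpha>"
  by (simp add: cb_def Let_def vec_eq6)

context
  fixes t :: real
  assumes t1: "t > 1"
begin

lemmas lsimps = lor_add_left lor_add_right lor_scaleR_left lor_scaleR_right lor_minus_left lor_minus_right
   lor_diff_left lor_diff_right lor_tab[OF t1] lor_ZZ[OF t1] lor_gK[OF t1]

lemma conf: "conf_spacelike_lift (Yt t)"
  unfolding conf_spacelike_lift_def
proof (intro conjI allI)
  show "smooth_map (Yt t)" by (simp add: Yt_cb[OF t1] smooth_cb)
next
  fix p
  have "lor (Yt t p) (cb t (aZ t) p) = -1/2"
    by (simp add: Yt_cb[OF t1] lor_cb lsimps)
  then show "Yt t p \<noteq> 0" by auto
  show "lor (Yt t p) (Yt t p) = 0" by (simp add: Yt_cb[OF t1] lor_cb lsimps)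
  show "clor (Yz (Yt t) p) (Yz (Yt t) p) = 0"
    by (simp add: Yz_eq[OF t1] clor_ccb lsimps complex_eq_iff)
  show "Im (clor (Yz (Yt t) p) (Yzb (Yt t) p)) = 0"
    by (simp add: Yz_eq[OF t1] Yzb_eq[OF t1] clor_ccb lsimps)
  show "Re (clor (Yz (Yt t) p) (Yzb (Yt t) p)) > 0"
    by (simp add: Yz_eq[OF t1] Yzb_eq[OF t1] clor_ccb lsimps)
qed

lemma canon: "canonical_lift (Yt t)"
  unfolding canonical_lift_def
  by (simp add: Yz_eq[OF t1] Yzb_eq[OF t1] clor_ccb lsimps complex_eq_iff)

lemma lor_N: "lor aN (aT t) = 0" "lor aN aP = 0" "lor aN aN = 0" "lor aN aY = -1"
  by (simp_all add: aN_def aT_def aP_def aY_def)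

lemma aN_comb: "aN = (kk t * kk t / 2) *\<^sub>R aY + 2 *\<^sub>R aZ t"
  using kc[OF t1] by (simp add: aN_def aY_def aZ_def field_simps)

lemma Nvec_eq: "Nvec (Yt t) p = cb t aN p"
  unfolding Nvec_def pdY1[OF t1] pdYi[OF t1]
proof (rule the_equality)
  have "cb t aN p \<in> Vsp (Yt t) p"
    unfolding Vsp_mem[OF t1] aN_comb
    by (rule exI[of _ "kk t * kk t / 2"], rule exI[of _ 0], rule exI[of _ 0], rule exI[of _ 2]) (simp add: mk6_zero[symmetric])
  then show "cb t aN p \<in> Vsp (Yt t) p \<and> lor (cb t aN p) (cb t (aT t) p) = 0 \<and>
    lor (cb t aN p) (cb t aP p) = 0 \<and> lor (cb t aN p) (cb t aN p) = 0 \<and> lor (cb t aN p) (Yt t p) = - 1"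
    by (simp add: lor_cb lor_N Yt_cb[OF t1])
next
  fix n assume h: "n \<in> Vsp (Yt t) p \<and> lor n (cb t (aT t) p) = 0 \<and> lor n (cb t aP p) = 0 \<and>
     lor n n = 0 \<and> lor n (Yt t p) = - 1"
  then obtain k1 k2 k3 k4 where n: "n = cb t (k1 *\<^sub>R aY + k2 *\<^sub>R aT t + k3 *\<^sub>R aP + k4 *\<^sub>R aZ t) p"
    unfolding Vsp_mem[OF t1] by blast
  from h have e2: "k2 = 0" and e3: "k3 = 0" and e4: "k4 = 2"
    by (simp_all add: n lor_cb lsimps Yt_cb[OF t1])
  from h have "lor (k1 *\<^sub>R aY + k4 *\<^sub>R aZ t) (k1 *\<^sub>R aY + k4 *\<^sub>R aZ t) = 0"
    by (simp add: n lor_cb e2 e3)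
  then have "- (k1 * k4) + k4 * k4 * (kk t * kk t / 4) = 0"
    by (simp add: lsimps algebra_simps)
  then have e1: "k1 = kk t * kk t / 2" using e4 by simp
  show "n = cb t aN p" unfolding n e1 e2 e3 e4 aN_comb by simp
qed

lemma lor_LR: "lor (aL t) aY = 0" "lor (aL t) (aT t) = 0" "lor (aL t) aP = 0" "lor (aL t) (aZ t) = 0"
  "lor (aR t) aY = 0" "lor (aR t) (aT t) = 0" "lor (aR t) aP = 0" "lor (aR t) (aZ t) = 0"
  "lor (aL t) (aL t) = 0" "lor (aR t) (aR t) = 0" "lor (aL t) (aR t) = -1"
  using kc[OF t1] by (simp_all add: aL_def aR_def aY_def aT_def aP_def aZ_def field_simps)

lemma frame_props: "smooth_map (cb t (aL t)) \<and> smooth_map (cb t (aR t)) \<and>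
   (\<forall>p. cb t (aL t) p \<in> Vperp (Yt t) p \<and> cb t (aR t) p \<in> Vperp (Yt t) p \<and>
        lor (cb t (aL t) p) (cb t (aL t) p) = 0 \<and> lor (cb t (aR t) p) (cb t (aR t) p) = 0 \<and>
        lor (cb t (aL t) p) (cb t (aR t) p) = -1)"
  by (simp add: smooth_cb Vperp_cb[OF t1] lor_cb lor_LR)

lemma hopf_formula: "hopf (Yt t) w =
   (- \<i> * complex_of_real t / complex_of_real (2 * sqrt 2 * sqrt (t\<^sup>2 - 1))) *s cvec (cb t (aL t) w - cb t (aR t) w)"
proof -
  have z: "(- \<i> * complex_of_real t / complex_of_real (2 * sqrt 2 * sqrt (t\<^sup>2 - 1))) = Complex 0 (- (kk t / (2 * sqrt 2)))"
    by (simp add: complex_eq_iff kk_def)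
  show ?thesis
    unfolding hopf_eq[OF t1] z cb_diff[symmetric] cvec_cb ccb_smult
    by (rule ccb_eqI) (simp_all add: gK_def aL_def aR_def field_simps mk6_zero[symmetric])
qed

end


lemma c00: "Complex 0 0 = 0" by (simp add: complex_eq_iff)

context
  fixes t :: real
  assumes t1: "t > 1"
begin

lemmas lsimps2 = lsimps[OF t1]

lemma lor_F: "lor (aF t) aY = 0" "lor (aF t) (aT t) = 0" "lor (aF t) aP = 0" "lor (aF t) (aZ t) = 0"
   "lor aE aY = 0" "lor aE (aT t) = 0" "lor aE aP = 0" "lor aE (aZ t) = 0"
  by (simp_all add: aF_def aE_def aY_def aT_def aP_def aZ_def algebra_simps)

lemma Vsp_aT: "cb t (\<mu> *\<^sub>R aT t) p \<in> Vsp (Yt t) p"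
  unfolding Vsp_mem[OF t1]
  by (rule exI[of _ 0], rule exI[of _ \<mu>], rule exI[of _ 0], rule exI[of _ 0]) simp
lemma Vsp_aP: "cb t (\<mu> *\<^sub>R aP) p \<in> Vsp (Yt t) p"
  unfolding Vsp_mem[OF t1]
  by (rule exI[of _ 0], rule exI[of _ 0], rule exI[of _ \<mu>], rule exI[of _ 0]) simp
lemma Vsp_aY: "cb t (\<mu> *\<^sub>R aY) p \<in> Vsp (Yt t) p"
  unfolding Vsp_mem[OF t1]
  by (rule exI[of _ \<mu>], rule exI[of _ 0], rule exI[of _ 0], rule exI[of _ 0]) simp
lemma Vsp_0: "cb t 0 p \<in> Vsp (Yt t) p"
  using Vsp_aY[of 0] by simp

lemma Dzb1: "Dzb (Yt t) (hopf (Yt t)) p = ccb t ((kk t * cc t / 4) *\<^sub>R aF t) 0 p"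
proof -
  have w: "dzb (hopf (Yt t)) p = ccb t (mk6 0 0 (- kk t / 4) 0 0 0) (mk6 0 (kk t * kk t / 4) 0 0 0 0) p"
    unfolding hopf_fun[OF t1] dzb_ccb by (rule ccb_eqI) (simp_all add: gK_def)
  have d: "dzb (hopf (Yt t)) p - ccb t ((kk t * cc t / 4) *\<^sub>R aF t) 0 p =
      ccb t ((- (kk t * kk t / 4)) *\<^sub>R aT t) ((kk t * kk t / 4) *\<^sub>R aP) p"
  proof -
    have s3: "- kk t / 4 - kk t * cc t / 4 * cc t = - (kk t * kk t / 4) * kk t"
      using kc[OF t1] by algebra
    have s6: "0 - kk t * cc t / 4 * kk t = - (kk t * kk t / 4) * cc t"
      by algebra
    show ?thesis
    unfolding w ccb_diff
    apply (intro ccb_eqI)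
     apply (simp only: aF_def aT_def mk6_scaleR mk6_diff mk6_eq_iff mk6_uminus)
     using s3 s6 apply simp
    apply (simp add: aP_def)
    done
  qed
  show ?thesis
    unfolding Dzb_def
    apply (rule projperp_eq[OF t1])
     apply (simp add: cVperp_ccb[OF t1] Vperp_cb[OF t1] lsimps2 lor_F zero_perp[OF t1])
    apply (simp only: d cVsp_ccb[OF t1] Vsp_aT Vsp_aP)
    done
qed

lemma Dzb1_fun: "Dzb (Yt t) (hopf (Yt t)) = ccb t ((kk t * cc t / 4) *\<^sub>R aF t) 0"
  by (rule ext) (rule Dzb1)

lemma Dzb2: "Dzb (Yt t) (Dzb (Yt t) (hopf (Yt t))) p = ccb t 0 ((kk t * cc t * cc t / 8) *\<^sub>R aE) p"
proof -
  have d: "dzb (ccb t ((kk t * cc t / 4) *\<^sub>R aF t) 0) p - ccb t 0 ((kk t * cc t * cc t / 8) *\<^sub>R aE) p =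
      ccb t ((- (kk t * kk t * cc t * cc t / 8)) *\<^sub>R aY) 0 p"
    unfolding dzb_ccb ccb_diff
    by (intro ccb_eqI) (simp_all add: aF_def aE_def aY_def field_simps mk6_zero[symmetric])
  show ?thesis
    unfolding Dzb1_fun
    unfolding Dzb_def
    apply (rule projperp_eq[OF t1])
     apply (simp add: cVperp_ccb[OF t1] Vperp_cb[OF t1] lsimps2 lor_F zero_perp[OF t1])
    apply (simp only: d cVsp_ccb[OF t1] Vsp_aY Vsp_0)
    done
qed

lemma willmore: "willmore_lift (Yt t)"
  unfolding willmore_lift_def
proof
  fix p
  show "Dzb (Yt t) (Dzb (Yt t) (hopf (Yt t))) p + (cnj (sfun (Yt t) p) / 2) *s hopf (Yt t) p = 0"
    unfolding Dzb2 sfun_eq[OF t1] hopf_eq[OF t1] ccb_smult ccb_add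
    by (simp add: aE_def gK_def ccb_zero mk6_zero[symmetric] field_simps)
qed

lemma not_swill: "\<not> s_willmore_lift (Yt t)"
proof
  assume "s_willmore_lift (Yt t)"
  then obtain a b where ab: "(a, b) \<noteq> (0, 0)" and
    e: "a *s Dzb (Yt t) (hopf (Yt t)) 0 + b *s hopf (Yt t) 0 = 0"
    unfolding s_willmore_lift_def by blast
  have e3: "(a *s Dzb (Yt t) (hopf (Yt t)) 0 + b *s hopf (Yt t) 0) $ 3 = 0"
   and e4: "(a *s Dzb (Yt t) (hopf (Yt t)) 0 + b *s hopf (Yt t) 0) $ 4 = 0"
    using e by simp_all
  have "a * Complex (kk t * cc t * cc t / 4) 0 = 0"
    using e3 unfolding Dzb1 hopf_eq[OF t1]
    by (simp add: ccb_nth cb_at0 aF_def gK_def cb_zero c00)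
  moreover have "Complex (kk t * cc t * cc t / 4) 0 \<noteq> 0"
    using kk_pos[OF t1] cc_pos[OF t1] by (simp add: complex_eq_iff)
  ultimately have a0: "a = 0" by simp
  have "b * Complex 0 (- kk t / 2) = 0"
    using e4 unfolding Dzb1 hopf_eq[OF t1]
    by (simp add: ccb_nth cb_at0 aF_def gK_def cb_zero a0 c00)
  then have "b = 0" using kk_pos[OF t1] by (simp add: complex_eq_iff)
  with a0 ab show False by simp
qed

end


definition fr :: "real \<Rightarrow> complex \<Rightarrow> real^6^6" where
  "fr t w = (\<chi> i. cb t (axis i 1) w)"

lemma vm_fr: "x v* fr t w = cb t x w"
  by (simp add: vec_eq6 vector_matrix_mult_def fr_def sum_6 cb_def Let_def axis_def algebra_simps)

lemma row_mult: "(A ** B) $ i = (A $ i) v* B"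
  by (simp add: matrix_matrix_mult_def vector_matrix_mult_def vec_eq_iff mult.commute)

lemma rowsM: "mk6 (cb t r1 w) (cb t r2 w) (cb t r3 w) (cb t r4 w) (cb t r5 w) (cb t r6 w) =
    mk6 r1 r2 r3 r4 r5 r6 ** fr t w"
  by (simp add: vec_eq6 row_mult vm_fr)

lemma fr0: "fr t 0 = mat 1"
  by (simp add: fr_def cb_at0 vec_eq_iff mat_def axis_def)

lemma lor_axis: "lor (axis i 1) (axis j 1) = (if i = j then sig i else 0)"
proof -
  have "lor (axis i 1) (axis j 1) = (\<Sum>k\<in>UNIV. if k = i then (if k = j then sig k else 0) else 0)"
    unfolding lor_def by (rule sum.cong) (auto simp: axis_def)
  then show ?thesis by simp
qed

definition Jm :: "real^6^6" where "Jm = (\<chi> i j. if i = j then sig i else 0)"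

lemma det_Jm: "det Jm = 1"
proof -
  have "det Jm = prod (\<lambda>i. Jm$i$i) (UNIV::6 set)"
    by (rule det_diagonal) (simp add: Jm_def)
  also have "\<dots> = prod sig UNIV" by (simp add: Jm_def)
  also have "\<dots> = sig 1 * sig 2 * sig 3 * sig 4 * sig 5 * sig 6"
    unfolding UNIV_6 by simp
  also have "\<dots> = 1" by simp
  finally show ?thesis .
qed

lemma mJ: "(A ** Jm) $ i $ k = A $ i $ k * sig k"
  unfolding matrix_matrix_mult_def Jm_def by (simp add: if_distrib cong: if_cong)

lemma fr_orth: "fr t w ** Jm ** transpose (fr t w) = Jm"
proof -
  have "(fr t w ** Jm ** transpose (fr t w)) $ i $ j = lor (fr t w $ i) (fr t w $ j)" for i j
    unfolding matrix_matrix_mult_def[of "fr t w ** Jm"] lor_def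
    by (simp add: mJ transpose_def algebra_simps)
  then show ?thesis
    by (simp add: vec_eq_iff fr_def lor_cb lor_axis Jm_def)
qed

lemma det_fr_sq: "det (fr t w) * det (fr t w) = 1"
proof -
  have "det (fr t w ** Jm ** transpose (fr t w)) = det Jm" by (simp add: fr_orth)
  then show ?thesis by (simp add: det_mul det_Jm)
qed

lemma cont_cb: "continuous_on UNIV (cb t \<alpha>)"
  by (meson cb_deriv continuous_at_imp_continuous_on has_derivative_continuous)

lemma cont_det_fr: "continuous_on UNIV (\<lambda>w. det (fr t w))"
  unfolding det_def fr_def
  by (intro continuous_intros continuous_on_component cont_cb)

lemma det_fr: "det (fr t w) = 1"
proof (rule ccontr)
  assume ne: "det (fr t w) \<noteq> 1"
  have m1: "det (fr t w) = -1"
    using det_fr_sq[of t w] ne by (metis mult_cancel_left1 square_eq_1_iff)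
  define g where "g s = det (fr t (complex_of_real s * w))" for s :: real
  have cg: "continuous_on {0..1} g"
    unfolding g_def
    by (rule continuous_on_compose2[OF cont_det_fr]) (auto intro!: continuous_intros)
  have "g 1 \<le> 0" "0 \<le> g 0" "(0::real) \<le> 1"
    using m1 by (simp_all add: g_def fr0)
  then obtain x where "g x = 0" using IVT2'[OF _ _ _ cg] by blast
  then show False using det_fr_sq[of t "complex_of_real x * w"] by (simp add: g_def)
qed

lemma det_shape: "det (mk6 (mk6 1 0 0 0 1 0) (mk6 0 0 a 0 0 b) (mk6 0 1 0 0 0 0) (mk6 (-1/2) 0 0 0 (1/2) 0)
   (mk6 0 0 x y 0 z) (mk6 0 0 u v 0 w) :: real^6^6) = a * (w * y - v * z) + b * (v * x - u * y)"
proof -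
  have f1: "finite {2::6, 3, 4, 5, 6}" "1 \<notin> {2::6, 3, 4, 5, 6}" by auto
  have f2: "finite {3::6, 4, 5, 6}" "2 \<notin> {3::6, 4, 5, 6}" by auto
  have f3: "finite {4::6, 5, 6}" "3 \<notin> {4::6, 5, 6}" by auto
  have f4: "finite {5::6, 6}" "4 \<notin> {5::6, 6}" by auto
  have f5: "finite {6::6}" "5 \<notin> {6::6}" by auto
  show ?thesis
    unfolding det_def UNIV_6
    unfolding sum_over_permutations_insert[OF f1]
    unfolding sum_over_permutations_insert[OF f2]
    unfolding sum_over_permutations_insert[OF f3]
    unfolding sum_over_permutations_insert[OF f4]
    unfolding sum_over_permutations_insert[OF f5]
    unfolding permutes_sing
    by (simp add: sign_swap_id permutation_swap_id sign_compose permutation_compose swap_id_eq algebra_simps)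
qed


lemma cos_per: "cos (x + 2 * pi * real n) = cos x"
  by (simp add: cos_add cos_integer_2pi sin_integer_2pi)
lemma sin_per: "sin (x + 2 * pi * real n) = sin x"
  by (simp add: sin_add cos_integer_2pi sin_integer_2pi)

lemma cb_shift_re:
  assumes "kk t * A = 2 * pi * real m" "cc t * A = 2 * pi * real n"
  shows "cb t \<alpha> (w + Complex A 0) = cb t \<alpha> w"
proof -
  have e1: "t / sqrt (t\<^sup>2 - 1) * (Re w + A) = t / sqrt (t\<^sup>2 - 1) * Re w + 2 * pi * real m"
    using assms(1) by (simp add: kk_def distrib_left)
  have e2: "1 / sqrt (t\<^sup>2 - 1) * (Re w + A) = 1 / sqrt (t\<^sup>2 - 1) * Re w + 2 * pi * real n"
    using assms(2) by (simp add: cc_def distrib_left)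
  show ?thesis
    unfolding cb_def Let_def using e1 e2 by (simp add: cos_per sin_per del: times_divide_eq_left)
qed

lemma cos_per2: "cos (2 * pi + x) = cos x" by (simp add: add.commute[of "2*pi"])
lemma sin_per2: "sin (2 * pi + x) = sin x" by (simp add: add.commute[of "2*pi"])
lemma cb_shift_im: "cb t \<alpha> (w + Complex 0 (2 * pi)) = cb t \<alpha> w"
  by (simp add: cb_def Let_def cos_per2 sin_per2)

context
  fixes t :: real
  assumes t1: "t > 1"
begin

lemma W_gen:
  assumes "A \<ge> 0" "B \<ge> 0"
  shows "willmore_rect (Yt t) A B = complex_of_real (A * B * (kk t * kk t) / 4)"
proof -
  have ig: "(\<lambda>w. clor (hopf (Yt t) w) (vcnj (hopf (Yt t) w)) * (- 2 * \<i>)) =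
        (\<lambda>w. complex_of_real (kk t * kk t / 4) * (- 2 * \<i>))"
    by (rule ext) (simp add: hopf_eq[OF t1] vcnj_ccb clor_ccb lor_minus_right gK_def complex_eq_iff)
  have ct: "Henstock_Kurzweil_Integration.content (cbox 0 (Complex A B)) = A * B"
    using assms by (simp add: content_cbox_if Basis_complex_def inner_complex_def box_eq_empty)
  show ?thesis
    unfolding willmore_rect_def ig integral_const ct
    by (simp add: scaleR_conv_of_real complex_eq_iff)
qed

lemma descends_gen:
  assumes "kk t * A = 2 * pi * real m" "cc t * A = 2 * pi * real n"
  shows "descends (Yt t) A (2 * pi)"
  unfolding descends_def Yt_cb[OF t1]
  using cb_shift_re[OF assms] cb_shift_im
  by (metis one_neq_zero scaleR_one)

end

lemma pq_facts:
  fixes p q :: nat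
  assumes "1 \<le> q" "q < p"
  shows "real p / real q > 1"
    and "sqrt ((real p / real q)\<^sup>2 - 1) = sqrt ((real p)\<^sup>2 - (real q)\<^sup>2) / real q"
proof -
  show "real p / real q > 1" using assms by simp
  have "(real p / real q)\<^sup>2 - 1 = ((real p)\<^sup>2 - (real q)\<^sup>2) / (real q)\<^sup>2"
    using assms by (simp add: field_simps power2_eq_square)
  then show "sqrt ((real p / real q)\<^sup>2 - 1) = sqrt ((real p)\<^sup>2 - (real q)\<^sup>2) / real q"
    by (simp add: real_sqrt_divide)
qed

lemma W_pq:
  fixes p q :: nat
  assumes "1 \<le> q" "q < p"
  shows "willmore_rect (Yt (real p / real q)) (2 * pi * real q * sqrt ((real p / real q)\<^sup>2 - 1)) (2 * pi)
     = complex_of_real ((real p)\<^sup>2 / sqrt ((real p)\<^sup>2 - (real q)\<^sup>2) * pi\<^sup>2)"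
proof -
  let ?t = "real p / real q"
  have t1: "?t > 1" using pq_facts[OF assms] by simp
  have s: "sqrt (?t\<^sup>2 - 1) = sqrt ((real p)\<^sup>2 - (real q)\<^sup>2) / real q" using pq_facts[OF assms] by simp
  have qp: "real q > 0" using assms by simp
  have d: "(real p)\<^sup>2 - (real q)\<^sup>2 > 0" using assms by (simp add: power_strict_mono)
  have sp: "sqrt ((real p)\<^sup>2 - (real q)\<^sup>2) > 0" using d by simp
  have A: "2 * pi * real q * sqrt (?t\<^sup>2 - 1) \<ge> 0" using s_pos[OF t1] by simp
  have "willmore_rect (Yt ?t) (2 * pi * real q * sqrt (?t\<^sup>2 - 1)) (2 * pi) =
        complex_of_real (2 * pi * real q * sqrt (?t\<^sup>2 - 1) * (2 * pi) * (kk ?t * kk ?t) / 4)"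
    by (rule W_gen[OF t1 A]) simp
  also have "2 * pi * real q * sqrt (?t\<^sup>2 - 1) * (2 * pi) * (kk ?t * kk ?t) / 4 =
      (real p)\<^sup>2 / sqrt ((real p)\<^sup>2 - (real q)\<^sup>2) * pi\<^sup>2"
    unfolding kk_def s using qp sp by (simp add: field_simps power2_eq_square)
  finally show ?thesis .
qed

lemma min_ineq:
  fixes p q :: nat
  assumes "1 \<le> q" "q < p"
  shows "(real p)\<^sup>2 / sqrt ((real p)\<^sup>2 - (real q)\<^sup>2) \<ge> 4 / sqrt 3"
proof (cases "p = 2")
  case True
  then have "q = 1" using assms by simp
  then show ?thesis using True by simp
next
  case False
  then have p3: "p \<ge> 3" using assms by simp
  have d: "(real p)\<^sup>2 - (real q)\<^sup>2 > 0" using assms by (simp add: power_strict_mono)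
  have "sqrt ((real p)\<^sup>2 - (real q)\<^sup>2) \<le> sqrt ((real p)\<^sup>2)"
    by (rule real_sqrt_le_mono) simp
  then have le: "sqrt ((real p)\<^sup>2 - (real q)\<^sup>2) \<le> real p" by simp
  have "real p \<le> (real p)\<^sup>2 / sqrt ((real p)\<^sup>2 - (real q)\<^sup>2)"
    using le d p3 by (simp add: field_simps power2_eq_square mult_left_mono)
  moreover have "4 / sqrt 3 \<le> 3"
  proof -
    have "4 \<le> 3 * sqrt 3"
    proof -
      have "(4::real) \<le> 3 * (3/2)" by simp
      also have "3/2 \<le> sqrt (3::real)" by (rule real_le_rsqrt) (simp add: power2_eq_square)
      finally show ?thesis by simp
    qed
    then show ?thesis by (simp add: field_simps)
  qed
  moreover have "(3::real) \<le> real p" using p3 by simp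
  ultimately show ?thesis by linarith
qed


lemma det_pos:
  assumes t1: "t > 1"
  shows "det (mk6 (Yt t p) (pd (Yt t) 1 p) (pd (Yt t) \<i> p) (Nvec (Yt t) p) (cb t (aR t) p) (cb t (aL t) p)) > 0"
proof -
  have "mk6 (Yt t p) (pd (Yt t) 1 p) (pd (Yt t) \<i> p) (Nvec (Yt t) p) (cb t (aR t) p) (cb t (aL t) p) =
        mk6 (cb t aY p) (cb t (aT t) p) (cb t aP p) (cb t aN p) (cb t (aR t) p) (cb t (aL t) p)"
    unfolding pdY1[OF t1] pdYi[OF t1] Nvec_eq[OF t1] unfolding Yt_cb[OF t1] ..
  also have "\<dots> = mk6 aY (aT t) aP aN (aR t) (aL t) ** fr t p" by (rule rowsM)
  finally have e: "det (mk6 (Yt t p) (pd (Yt t) 1 p) (pd (Yt t) \<i> p) (Nvec (Yt t) p) (cb t (aR t) p) (cb t (aL t) p))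
     = det (mk6 aY (aT t) aP aN (aR t) (aL t))"
    by (simp add: det_mul det_fr)
  have "det (mk6 aY (aT t) aP aN (aR t) (aL t)) =
     kk t * ((- kk t / sqrt 2) * (- 1 / sqrt 2) - (1 / sqrt 2) * (- kk t / sqrt 2)) +
     cc t * ((1 / sqrt 2) * (- cc t / sqrt 2) - (- cc t / sqrt 2) * (- 1 / sqrt 2))"
    unfolding aY_def aT_def aP_def aN_def aR_def aL_def by (rule det_shape)
  also have "\<dots> = kk t * kk t - cc t * cc t" by (simp add: field_simps)
  also have "\<dots> = 1" using kc[OF t1] by simp
  finally show ?thesis using e by simp
qed

theorem mainTheorem12:
  fixes t :: real
  assumes "t > 1"
  shows "conf_spacelike_lift (Yt t) \<and> canonical_lift (Yt t) \<and>
         willmore_lift (Yt t) \<and> \<not> s_willmore_lift (Yt t) \<and>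
         (\<exists>L R. null_normal_frame (Yt t) L R \<and>
            (\<forall>w. hopf (Yt t) w =
                 (- \<i> * complex_of_real t / complex_of_real (2 * sqrt 2 * sqrt (t\<^sup>2 - 1)))
                   *s cvec (L w - R w))) \<and>
         (\<forall>p q :: nat. coprime p q \<and> 1 \<le> q \<and> q < p \<and> t = real p / real q \<longrightarrow>
            descends (Yt t) (2 * pi * real q * sqrt (t\<^sup>2 - 1)) (2 * pi) \<and>
            willmore_rect (Yt t) (2 * pi * real q * sqrt (t\<^sup>2 - 1)) (2 * pi) =
              complex_of_real ((real p)\<^sup>2 / sqrt ((real p)\<^sup>2 - (real q)\<^sup>2) * pi\<^sup>2)) \<and>
         (\<forall>p q :: nat. coprime p q \<and> 1 \<le> q \<and> q < p \<longrightarrow>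
            Re (willmore_rect (Yt (real p / real q))
                  (2 * pi * real q * sqrt ((real p / real q)\<^sup>2 - 1)) (2 * pi))
              \<ge> 4 / sqrt 3 * pi\<^sup>2) \<and>
         (\<exists>p q :: nat. coprime p q \<and> 1 \<le> q \<and> q < p \<and>
            willmore_rect (Yt (real p / real q))
                  (2 * pi * real q * sqrt ((real p / real q)\<^sup>2 - 1)) (2 * pi)
              = complex_of_real (4 / sqrt 3 * pi\<^sup>2))"
proof (intro conjI)
  show "conf_spacelike_lift (Yt t)" by (rule conf[OF assms])
  show "canonical_lift (Yt t)" by (rule canon[OF assms])
  show "willmore_lift (Yt t)" by (rule willmore[OF assms])
  show "\<not> s_willmore_lift (Yt t)" by (rule not_swill[OF assms])
  show "\<exists>L R. null_normal_frame (Yt t) L R \<and>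
            (\<forall>w. hopf (Yt t) w =
                 (- \<i> * complex_of_real t / complex_of_real (2 * sqrt 2 * sqrt (t\<^sup>2 - 1)))
                   *s cvec (L w - R w))"
  proof (intro exI conjI allI)
    show "null_normal_frame (Yt t) (cb t (aL t)) (cb t (aR t))"
      unfolding null_normal_frame_def using frame_props[OF assms] det_pos[OF assms] by blast
    fix w
    show "hopf (Yt t) w = (- \<i> * complex_of_real t / complex_of_real (2 * sqrt 2 * sqrt (t\<^sup>2 - 1)))
                   *s cvec (cb t (aL t) w - cb t (aR t) w)"
      by (rule hopf_formula[OF assms])
  qed
  show "\<forall>p q :: nat. coprime p q \<and> 1 \<le> q \<and> q < p \<and> t = real p / real q \<longrightarrow>
            descends (Yt t) (2 * pi * real q * sqrt (t\<^sup>2 - 1)) (2 * pi) \<and>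
            willmore_rect (Yt t) (2 * pi * real q * sqrt (t\<^sup>2 - 1)) (2 * pi) =
              complex_of_real ((real p)\<^sup>2 / sqrt ((real p)\<^sup>2 - (real q)\<^sup>2) * pi\<^sup>2)"
  proof (intro allI impI conjI)
    fix p q :: nat
    assume h: "coprime p q \<and> 1 \<le> q \<and> q < p \<and> t = real p / real q"
    have qp: "real q > 0" using h by simp
    have sp: "sqrt (t\<^sup>2 - 1) > 0" by (rule s_pos[OF assms])
    have tq: "t * real q = real p" using h qp by simp
    show "descends (Yt t) (2 * pi * real q * sqrt (t\<^sup>2 - 1)) (2 * pi)"
    proof (rule descends_gen[OF assms, of _ p q])
      show "kk t * (2 * pi * real q * sqrt (t\<^sup>2 - 1)) = 2 * pi * real p"
        using sp tq by (simp add: kk_def field_simps)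
      show "cc t * (2 * pi * real q * sqrt (t\<^sup>2 - 1)) = 2 * pi * real q"
        using sp by (simp add: cc_def field_simps)
    qed
    show "willmore_rect (Yt t) (2 * pi * real q * sqrt (t\<^sup>2 - 1)) (2 * pi) =
              complex_of_real ((real p)\<^sup>2 / sqrt ((real p)\<^sup>2 - (real q)\<^sup>2) * pi\<^sup>2)"
      using W_pq[of q p] h by simp
  qed
  show "\<forall>p q :: nat. coprime p q \<and> 1 \<le> q \<and> q < p \<longrightarrow>
            Re (willmore_rect (Yt (real p / real q))
                  (2 * pi * real q * sqrt ((real p / real q)\<^sup>2 - 1)) (2 * pi))
              \<ge> 4 / sqrt 3 * pi\<^sup>2"
  proof (intro allI impI)
    fix p q :: nat
    assume h: "coprime p q \<and> 1 \<le> q \<and> q < p"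
    have "4 / sqrt 3 * pi\<^sup>2 \<le> (real p)\<^sup>2 / sqrt ((real p)\<^sup>2 - (real q)\<^sup>2) * pi\<^sup>2"
      using min_ineq[of q p] h by (intro mult_right_mono) auto
    then show "Re (willmore_rect (Yt (real p / real q))
                  (2 * pi * real q * sqrt ((real p / real q)\<^sup>2 - 1)) (2 * pi))
              \<ge> 4 / sqrt 3 * pi\<^sup>2"
      using W_pq[of q p] h by simp
  qed
  show "\<exists>p q :: nat. coprime p q \<and> 1 \<le> q \<and> q < p \<and>
            willmore_rect (Yt (real p / real q))
                  (2 * pi * real q * sqrt ((real p / real q)\<^sup>2 - 1)) (2 * pi)
              = complex_of_real (4 / sqrt 3 * pi\<^sup>2)"
  proof (intro exI conjI)
    show "coprime (2::nat) 1" by simp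
    show "1 \<le> (1::nat)" by simp
    show "1 < (2::nat)" by simp
    show "willmore_rect (Yt (real 2 / real 1))
                  (2 * pi * real 1 * sqrt ((real 2 / real 1)\<^sup>2 - 1)) (2 * pi)
              = complex_of_real (4 / sqrt 3 * pi\<^sup>2)"
      using W_pq[of 1 2] by simp
  qed
qed


end
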